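(* Let $\Lambda$ be a finite chain (path graph) with vertices $1,\dots,L$, $L\geq2$, and edges $(x,x+1)$ with arbitrary positive jump rates. For the symmetric simple exclusion process on $\Lambda$, $\lambda(n)=\lambda(1)$ for all $1\le n\le L-1$.
   Context: The SSEP with jump rates $c_{xy}>0$ has generator $(Lf)(\eta)=\sum_{x\sim y}c_{xy}(f(\eta)-f(\eta^{xy}))$ on functions on $\{0,1\}^\Lambda$, where $\eta^{xy}$ interchanges the values of $\eta$ at $x$ and $y$. $L$ preserves the space of functions supported on configurations with exactly $n$ particles ($\sum_x\eta(x)=n$), and $\lambda(n)$ is the smallest positive eigenvalue of $L$ restricted to this space. *)

theory Defs
  imports Complex_Main
begin

text \<open>Chain with vertices 1..L and edges (x, x+1), 1 <= x <= L-1.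
  A configuration eta in {0,1}^Lambda is represented by its set of occupied sites.\<close>

definition exch :: "nat \<Rightarrow> nat \<Rightarrow> nat set \<Rightarrow> nat set" where
  "exch x y A = (\<lambda>z. if z = x then y else if z = y then x else z) ` A"

definition configs :: "nat \<Rightarrow> nat \<Rightarrow> nat set set" where
  "configs L n = {A. A \<subseteq> {1..L} \<and> card A = n}"

definition ssep_gen :: "nat \<Rightarrow> (nat \<Rightarrow> real) \<Rightarrow> (nat set \<Rightarrow> real) \<Rightarrow> nat set \<Rightarrow> real" where
  "ssep_gen L c f A = (\<Sum>x\<in>{1..<L}. c x * (f A - f (exch x (x+1) A)))"

definition is_eigenvalue_n :: "nat \<Rightarrow> (nat \<Rightarrow> real) \<Rightarrow> nat \<Rightarrow> real \<Rightarrow> bool" where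
  "is_eigenvalue_n L c n \<mu> \<longleftrightarrow>
     (\<exists>f. (\<exists>A\<in>configs L n. f A \<noteq> 0) \<and> (\<forall>A\<in>configs L n. ssep_gen L c f A = \<mu> * f A))"

definition spectral_gap :: "nat \<Rightarrow> (nat \<Rightarrow> real) \<Rightarrow> nat \<Rightarrow> real" where
  "spectral_gap L c n = Inf {\<mu>. \<mu> > 0 \<and> is_eigenvalue_n L c n \<mu>}"

end

theory Submission
  imports Defs "HOL-Analysis.Analysis"
begin


definition sw :: "nat \<Rightarrow> nat \<Rightarrow> nat" where
  "sw y z = (if z = y then Suc y else if z = Suc y then y else z)"

definition rw :: "nat \<Rightarrow> (nat \<Rightarrow> real) \<Rightarrow> (nat \<Rightarrow> real) \<Rightarrow> nat \<Rightarrow> real" where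
  "rw L c g x = (\<Sum>y\<in>{1..<L}. c y * (g x - g (sw y x)))"

definition lift :: "(nat \<Rightarrow> real) \<Rightarrow> nat set \<Rightarrow> real" where
  "lift g A = (\<Sum>x\<in>A. g x)"

definition tr :: "nat \<Rightarrow> nat \<Rightarrow> (nat set \<Rightarrow> real) \<Rightarrow> nat \<Rightarrow> real" where
  "tr L n f x = (\<Sum>A\<in>{A\<in>configs L n. x \<in> A}. f A)"

lemma exch_sw: "exch y (Suc y) A = sw y ` A"
  unfolding exch_def sw_def by simp

lemma sw_sw[simp]: "sw y (sw y z) = z"
  unfolding sw_def by auto

lemma inj_sw: "inj (sw y)"
  by (metis injI sw_sw)

lemma exch_invol[simp]: "exch y (Suc y) (exch y (Suc y) A) = A"
  unfolding exch_sw image_image by simp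

lemma finite_configs[simp]: "finite (configs L n)"
proof -
  have "configs L n \<subseteq> Pow {1..L}" unfolding configs_def by auto
  then show ?thesis by (rule finite_subset) simp
qed

lemma configs_finite_mem: "A \<in> configs L n \<Longrightarrow> finite A"
  unfolding configs_def by (auto intro: finite_subset)

lemma exch_configs:
  assumes "1 \<le> y" "y < L" "A \<in> configs L n"
  shows "exch y (Suc y) A \<in> configs L n"
proof -
  have "sw y ` A \<subseteq> {1..L}" using assms unfolding configs_def sw_def by auto
  moreover have "card (sw y ` A) = card A"
    by (meson card_image inj_sw inj_on_subset subset_UNIV)
  ultimately show ?thesis using assms unfolding configs_def exch_sw by auto
qed

lemma sum_exch:
  assumes "1 \<le> y" "y < L"
  shows "(\<Sum>A\<in>configs L n. h (exch y (Suc y) A)) = (\<Sum>A\<in>configs L n. h A)"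
  by (rule sum.reindex_bij_witness[where i="exch y (Suc y)" and j="exch y (Suc y)"])
     (auto intro: exch_configs[OF assms])

lemma gen_expand:
  "(\<Sum>A\<in>configs L n. f A * ssep_gen L c h A) = (\<Sum>y\<in>{1..<L}. c y * ((\<Sum>A\<in>configs L n. f A * h A) - (\<Sum>A\<in>configs L n. f A * h (exch y (Suc y) A))))"
    unfolding ssep_gen_def sum_distrib_left
    by (subst sum.swap) (simp add: algebra_simps sum_subtractf sum_distrib_left)

lemma gen_sym:
  "(\<Sum>A\<in>configs L n. f A * ssep_gen L c h A) = (\<Sum>A\<in>configs L n. h A * ssep_gen L c f A)"
proof -
  have key: "(\<Sum>A\<in>configs L n. f A * h (exch y (Suc y) A)) = (\<Sum>A\<in>configs L n. h A * f (exch y (Suc y) A))"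
    if "y \<in> {1..<L}" for y
  proof -
    have "(\<Sum>A\<in>configs L n. f A * h (exch y (Suc y) A)) = (\<Sum>A\<in>configs L n. f (exch y (Suc y) A) * h (exch y (Suc y) (exch y (Suc y) A)))"
      using sum_exch[of y L "\<lambda>A. f A * h (exch y (Suc y) A)" n] that by simp
    then show ?thesis by (simp add: mult.commute)
  qed
  show ?thesis unfolding gen_expand
    using key by (intro sum.cong) (auto simp: mult.commute)
qed

lemma gen_sum0: "(\<Sum>A\<in>configs L n. ssep_gen L c f A) = 0"
  using gen_expand[where f="\<lambda>_. 1" and h=f and L=L and n=n and c=c] sum_exch[of _ L f n] by simp

lemma gen_quad:
  "(\<Sum>A\<in>configs L n. f A * ssep_gen L c f A) = (\<Sum>y\<in>{1..<L}. c y * (\<Sum>A\<in>configs L n. (f A - f (exch y (Suc y) A))^2)) / 2"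
proof -
  have "(\<Sum>A\<in>configs L n. (f A - f (exch y (Suc y) A))^2) = 2 * ((\<Sum>A\<in>configs L n. f A * f A) - (\<Sum>A\<in>configs L n. f A * f (exch y (Suc y) A)))"
    if "y \<in> {1..<L}" for y
  proof -
    have "(\<Sum>A\<in>configs L n. (f (exch y (Suc y) A))^2) = (\<Sum>A\<in>configs L n. (f A)^2)"
      using sum_exch[of y L "\<lambda>A. (f A)^2" n] that by simp
    then show ?thesis
      by (simp add: power2_diff sum.distrib sum_subtractf sum_distrib_left power2_eq_square algebra_simps)
  qed
  then show ?thesis unfolding gen_expand sum_divide_distrib
    by (intro sum.cong) auto
qed

lemma exch_sw': "exch y (y+1) A = sw y ` A"
  unfolding exch_def sw_def by simp

lemma lift_gen:
  assumes "finite A"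
  shows "ssep_gen L c (lift g) A = lift (rw L c g) A"
proof -
  have r: "(\<Sum>z\<in>sw y ` A. g z) = (\<Sum>x\<in>A. g (sw y x))" for y
    by (subst sum.reindex) (auto intro: inj_on_subset[OF inj_sw])
  have "ssep_gen L c (lift g) A = (\<Sum>y\<in>{1..<L}. c y * ((\<Sum>x\<in>A. g x) - (\<Sum>x\<in>A. g (sw y x))))"
    unfolding ssep_gen_def lift_def exch_sw' r ..
  also have "\<dots> = (\<Sum>y\<in>{1..<L}. \<Sum>x\<in>A. c y * (g x - g (sw y x)))"
    by (simp add: sum_distrib_left sum_subtractf algebra_simps)
  also have "\<dots> = lift (rw L c g) A"
    unfolding lift_def rw_def by (rule sum.swap)
  finally show ?thesis .
qed

lemma adjoint:
  "(\<Sum>A\<in>configs L n. f A * lift g A) = (\<Sum>x\<in>{1..L}. g x * tr L n f x)"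
proof -
  have "(\<Sum>A\<in>configs L n. f A * lift g A) = (\<Sum>A\<in>configs L n. \<Sum>x\<in>{1..L}. if x \<in> A then f A * g x else 0)"
  proof (intro sum.cong refl)
    fix A assume "A \<in> configs L n"
    then have "A \<subseteq> {1..L}" unfolding configs_def by auto
    then have "A = {x\<in>{1..L}. x \<in> A}" by auto
    then have "(\<Sum>x\<in>A. f A * g x) = (\<Sum>x\<in>{x\<in>{1..L}. x \<in> A}. f A * g x)" by simp
    also have "\<dots> = (\<Sum>x\<in>{1..L}. if x \<in> A then f A * g x else 0)"
      by (rule sum.inter_filter) simp
    finally show "f A * lift g A = (\<Sum>x\<in>{1..L}. if x \<in> A then f A * g x else 0)"
      unfolding lift_def sum_distrib_left .
  qed
  also have "\<dots> = (\<Sum>x\<in>{1..L}. \<Sum>A\<in>configs L n. if x \<in> A then f A * g x else 0)"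
    by (rule sum.swap)
  also have "\<dots> = (\<Sum>x\<in>{1..L}. g x * tr L n f x)"
  proof (intro sum.cong refl)
    fix x
    have "(\<Sum>A\<in>configs L n. if x \<in> A then f A * g x else 0) = (\<Sum>A\<in>{A\<in>configs L n. x \<in> A}. f A * g x)"
      by (rule sum.inter_filter[symmetric]) simp
    then show "(\<Sum>A\<in>configs L n. if x \<in> A then f A * g x else 0) = g x * tr L n f x"
      unfolding tr_def sum_distrib_left by (simp add: mult.commute)
  qed
  finally show ?thesis .
qed

lemma rw_quad:
  "(\<Sum>x\<in>{1..L}. h x * rw L c g x) = (\<Sum>y\<in>{1..<L}. c y * ((h y - h (Suc y)) * (g y - g (Suc y))))"
proof -
  have "(\<Sum>x\<in>{1..L}. h x * rw L c g x) = (\<Sum>y\<in>{1..<L}. c y * (\<Sum>x\<in>{1..L}. h x * (g x - g (sw y x))))"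
    unfolding rw_def sum_distrib_left by (subst sum.swap) (simp add: algebra_simps)
  also have "\<dots> = (\<Sum>y\<in>{1..<L}. c y * ((h y - h (Suc y)) * (g y - g (Suc y))))"
  proof (intro sum.cong refl)
    fix y assume y: "y \<in> {1..<L}"
    have "(\<Sum>x\<in>{1..L}. h x * (g x - g (sw y x))) = (\<Sum>x\<in>{y, Suc y}. h x * (g x - g (sw y x)))"
    proof (rule sum.mono_neutral_right)
      show "\<forall>x\<in>{1..L} - {y, Suc y}. h x * (g x - g (sw y x)) = 0"
      proof
        fix x assume "x \<in> {1..L} - {y, Suc y}"
        then have "sw y x = x" by (simp add: sw_def)
        then show "h x * (g x - g (sw y x)) = 0" by simp
      qed
    qed (use y in auto)
    also have "\<dots> = (h y - h (Suc y)) * (g y - g (Suc y))"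
      by (simp add: sw_def algebra_simps)
    finally show "c y * (\<Sum>x\<in>{1..L}. h x * (g x - g (sw y x))) = c y * ((h y - h (Suc y)) * (g y - g (Suc y)))"
      by simp
  qed
  finally show ?thesis .
qed

lemma rw_sum0: "(\<Sum>x\<in>{1..L}. rw L c g x) = 0"
  using rw_quad[where h="\<lambda>_. 1" and L=L and c=c and g=g] by simp

lemma count_ins:
  assumes "finite S" "x \<notin> S"
  shows "card {A. A \<subseteq> insert x S \<and> card A = Suc k \<and> x \<in> A} = card S choose k"
proof -
  have "{A. A \<subseteq> insert x S \<and> card A = Suc k \<and> x \<in> A} = insert x ` {B. B \<subseteq> S \<and> card B = k}"
  proof (intro equalityI subsetI)
    fix A assume A: "A \<in> {A. A \<subseteq> insert x S \<and> card A = Suc k \<and> x \<in> A}"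
    then have "A = insert x (A - {x})" by auto
    moreover have "A - {x} \<subseteq> S" "card (A - {x}) = k"
      using A assms by auto
    ultimately show "A \<in> insert x ` {B. B \<subseteq> S \<and> card B = k}" by blast
  next
    fix A assume "A \<in> insert x ` {B. B \<subseteq> S \<and> card B = k}"
    then obtain B where "B \<subseteq> S" "card B = k" "A = insert x B" by auto
    moreover have "finite B" using \<open>B \<subseteq> S\<close> assms finite_subset by auto
    moreover have "x \<notin> B" using \<open>B \<subseteq> S\<close> assms by auto
    ultimately show "A \<in> {A. A \<subseteq> insert x S \<and> card A = Suc k \<and> x \<in> A}"
      using assms by auto
  qed
  moreover have "inj_on (insert x) {B. B \<subseteq> S \<and> card B = k}"
    using assms by (intro inj_onI) (metis Diff_insert_absorb in_mono mem_Collect_eq)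
  ultimately show ?thesis using n_subsets[OF assms(1)] by (simp add: card_image)
qed

lemma cnt1:
  assumes "x \<in> {1..L}"
  shows "card {A\<in>configs L (Suc k). x \<in> A} = (L - 1) choose k"
proof -
  have "{A\<in>configs L (Suc k). x \<in> A} = {A. A \<subseteq> insert x ({1..L} - {x}) \<and> card A = Suc k \<and> x \<in> A}"
    using assms unfolding configs_def by auto
  also have "card \<dots> = card ({1..L} - {x}) choose k"
    by (rule count_ins) auto
  finally show ?thesis using assms by simp
qed

lemma cnt2:
  assumes "x \<in> {1..L}" "z \<in> {1..L}" "x \<noteq> z"
  shows "card {A\<in>configs L (Suc k). x \<in> A \<and> z \<notin> A} = (L - 2) choose k"
proof -
  have "{A\<in>configs L (Suc k). x \<in> A \<and> z \<notin> A} = {A. A \<subseteq> insert x ({1..L} - {x, z}) \<and> card A = Suc k \<and> x \<in> A}"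
    using assms unfolding configs_def by auto
  also have "card \<dots> = card ({1..L} - {x, z}) choose k"
    by (rule count_ins) auto
  finally show ?thesis using assms by (simp add: numeral_2_eq_2)
qed

lemma tr_ind:
  assumes "x \<in> {1..L}" "z \<in> {1..L}"
  shows "tr L (Suc k) (\<lambda>A. if x \<in> A then 1 else 0) z =
    (if z = x then real ((L - 1) choose k) else real ((L - 1) choose k) - real ((L - 2) choose k))"
proof -
  have "tr L (Suc k) (\<lambda>A. if x \<in> A then 1 else 0) z = (\<Sum>A\<in>{A\<in>configs L (Suc k). z \<in> A}. if x \<in> A then 1 else 0)"
    unfolding tr_def ..
  also have "\<dots> = real (card {A\<in>configs L (Suc k). z \<in> A \<and> x \<in> A})"
    by (subst sum.inter_filter[symmetric]) (auto intro: arg_cong[where f=card])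
  finally have e: "tr L (Suc k) (\<lambda>A. if x \<in> A then 1 else 0) z = real (card {A\<in>configs L (Suc k). z \<in> A \<and> x \<in> A})" .
  show ?thesis
  proof (cases "z = x")
    case True
    then show ?thesis using e cnt1[OF assms(1), of k] by simp
  next
    case False
    have u: "{A\<in>configs L (Suc k). x \<in> A} = {A\<in>configs L (Suc k). z \<in> A \<and> x \<in> A} \<union> {A\<in>configs L (Suc k). x \<in> A \<and> z \<notin> A}"
      by auto
    have "card {A\<in>configs L (Suc k). x \<in> A} = card {A\<in>configs L (Suc k). z \<in> A \<and> x \<in> A} + card {A\<in>configs L (Suc k). x \<in> A \<and> z \<notin> A}"
      unfolding u by (rule card_Un_disjoint) auto
    then show ?thesis using e cnt1[OF assms(1), of k] cnt2[OF assms(1,2), of k] False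
      by (simp add: of_nat_add[symmetric] del: of_nat_add)
  qed
qed

lemma lift_one: "lift (\<lambda>_. 1) A = real (card A)"
  unfolding lift_def by simp

lemma tr_lift:
  assumes "x \<in> {1..L}"
  shows "tr L (Suc k) (lift g) x = real ((L - 2) choose k) * g x
     + (real ((L - 1) choose k) - real ((L - 2) choose k)) * (\<Sum>z\<in>{1..L}. g z)"
proof -
  define N1 where "N1 = real ((L - 1) choose k)"
  define a where "a = real ((L - 2) choose k)"
  have "tr L (Suc k) (lift g) x = (\<Sum>A\<in>configs L (Suc k). (if x \<in> A then 1 else 0) * lift g A)"
    unfolding tr_def by (simp add: sum.inter_filter) (intro sum.cong, auto)
  also have "\<dots> = (\<Sum>z\<in>{1..L}. g z * tr L (Suc k) (\<lambda>A. if x \<in> A then 1 else 0) z)"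
    by (rule adjoint)
  also have "\<dots> = (\<Sum>z\<in>{1..L}. g z * (if z = x then N1 else N1 - a))"
    using tr_ind[OF assms] unfolding N1_def a_def by (intro sum.cong) auto
  also have "\<dots> = (\<Sum>z\<in>{1..L}. g z * (N1 - a) + (if z = x then a * g z else 0))"
    by (intro sum.cong) (auto simp: algebra_simps)
  also have "\<dots> = (\<Sum>z\<in>{1..L}. g z * (N1 - a)) + (\<Sum>z\<in>{1..L}. (if z = x then a * g z else 0))"
    by (rule sum.distrib)
  also have "\<dots> = (N1 - a) * (\<Sum>z\<in>{1..L}. g z) + a * g x"
    using assms by (simp add: sum_distrib_left mult.commute)
  finally show ?thesis unfolding N1_def a_def by simp
qed

definition RWP :: "nat \<Rightarrow> (nat \<Rightarrow> real) \<Rightarrow> real \<Rightarrow> bool" where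
  "RWP L c \<gamma> \<longleftrightarrow> (\<forall>g. (\<Sum>x\<in>{1..L}. g x) = 0 \<longrightarrow>
      \<gamma> * (\<Sum>x\<in>{1..L}. (g x)^2) \<le> (\<Sum>x\<in>{1..L}. g x * rw L c g x))"

lemma RWP_down:
  assumes c: "\<And>y. 1 \<le> y \<Longrightarrow> y < L \<Longrightarrow> 0 \<le> c y" and g0: "0 \<le> \<gamma>" and R: "RWP (Suc L) c \<gamma>"
  shows "RWP L c \<gamma>"
  unfolding RWP_def
proof (intro allI impI)
  fix g :: "nat \<Rightarrow> real" assume sg: "(\<Sum>x\<in>{1..L}. g x) = 0"
  show "\<gamma> * (\<Sum>x\<in>{1..L}. (g x)^2) \<le> (\<Sum>x\<in>{1..L}. g x * rw L c g x)"
  proof (cases "L = 0")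
    case True then show ?thesis by simp
  next
    case False
    define m where "m = g L / real (Suc L)"
    define g' where "g' x = (if x = Suc L then g L else g x) - m" for x
    have s1: "(\<Sum>x\<in>{1..Suc L}. (if x = Suc L then g L else g x)) = g L"
      using sg by (simp add: sum.atLeast_Suc_atMost_Suc_shift[symmetric] del: sum.atLeast_Suc_atMost_Suc_shift)
    have "(\<Sum>x\<in>{1..Suc L}. g' x) = 0"
      unfolding g'_def sum_subtractf s1 m_def by simp
    then have A: "\<gamma> * (\<Sum>x\<in>{1..Suc L}. (g' x)^2) \<le> (\<Sum>x\<in>{1..Suc L}. g' x * rw (Suc L) c g' x)"
      using R unfolding RWP_def by blast
    have "(\<Sum>x\<in>{1..Suc L}. g' x * rw (Suc L) c g' x) = (\<Sum>y\<in>{1..<Suc L}. c y * ((g' y - g' (Suc y)) * (g' y - g' (Suc y))))"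
      by (rule rw_quad)
    also have "\<dots> = (\<Sum>y\<in>{1..<L}. c y * ((g' y - g' (Suc y)) * (g' y - g' (Suc y))))"
      using False by (simp add: g'_def)
    also have "\<dots> = (\<Sum>y\<in>{1..<L}. c y * ((g y - g (Suc y)) * (g y - g (Suc y))))"
      by (intro sum.cong) (auto simp: g'_def)
    also have "\<dots> = (\<Sum>x\<in>{1..L}. g x * rw L c g x)"
      by (rule rw_quad[symmetric])
    finally have B: "(\<Sum>x\<in>{1..Suc L}. g' x * rw (Suc L) c g' x) = (\<Sum>x\<in>{1..L}. g x * rw L c g x)" .
    have "(\<Sum>x\<in>{1..L}. (g x)^2) \<le> (\<Sum>x\<in>{1..L}. (g x)^2) + real L * m^2"
      by simp
    also have "\<dots> = (\<Sum>x\<in>{1..L}. (g x - m)^2)"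
      using sg by (simp add: power2_diff sum.distrib sum_subtractf sum_distrib_left[symmetric] sum_distrib_right[symmetric] algebra_simps)
    also have "\<dots> = (\<Sum>x\<in>{1..L}. (g' x)^2)"
      by (intro sum.cong) (auto simp: g'_def)
    also have "\<dots> \<le> (\<Sum>x\<in>{1..Suc L}. (g' x)^2)"
      by (rule sum_mono2) auto
    finally have C: "(\<Sum>x\<in>{1..L}. (g x)^2) \<le> (\<Sum>x\<in>{1..Suc L}. (g' x)^2)" .
    have "\<gamma> * (\<Sum>x\<in>{1..L}. (g x)^2) \<le> \<gamma> * (\<Sum>x\<in>{1..Suc L}. (g' x)^2)"
      using C g0 by (rule mult_left_mono)
    then show ?thesis using A B by linarith
  qed
qed

lemma triv_case:
  assumes "configs L n \<subseteq> {A0}" "(\<Sum>A\<in>configs L n. f A) = 0"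
  shows "\<gamma> * (\<Sum>A\<in>configs L n. (f A)^2) \<le> (\<Sum>A\<in>configs L n. f A * ssep_gen L c f A)"
proof -
  have "\<forall>A\<in>configs L n. f A = 0"
  proof (cases "configs L n = {}")
    case False
    then have "configs L n = {A0}" using assms(1) by blast
    then show ?thesis using assms(2) by simp
  qed simp
  then show ?thesis by simp
qed

lemma gen_add: "ssep_gen L c (\<lambda>A. u A + u' A) A = ssep_gen L c u A + ssep_gen L c u' A"
  unfolding ssep_gen_def by (simp add: sum.distrib[symmetric] algebra_simps)

lemma split_sum:
  "(\<Sum>A\<in>configs (Suc L) (Suc k). F A) = (\<Sum>B\<in>configs L (Suc k). F B) + (\<Sum>B\<in>configs L k. F (insert (Suc L) B))"
proof -
  have e: "configs (Suc L) (Suc k) = configs L (Suc k) \<union> insert (Suc L) ` configs L k"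
  proof (intro equalityI subsetI)
    fix A assume A: "A \<in> configs (Suc L) (Suc k)"
    then have fA: "finite A" by (rule configs_finite_mem)
    show "A \<in> configs L (Suc k) \<union> insert (Suc L) ` configs L k"
    proof (cases "Suc L \<in> A")
      case True
      then have "A = insert (Suc L) (A - {Suc L})" by auto
      moreover have "A - {Suc L} \<in> configs L k"
        using A True fA unfolding configs_def by auto
      ultimately show ?thesis by blast
    next
      case False
      then have "A \<in> configs L (Suc k)" using A unfolding configs_def by (auto simp: le_Suc_eq)
      then show ?thesis by blast
    qed
  next
    fix A assume "A \<in> configs L (Suc k) \<union> insert (Suc L) ` configs L k"
    then show "A \<in> configs (Suc L) (Suc k)"
    proof
      assume "A \<in> configs L (Suc k)" then show ?thesis unfolding configs_def by auto
    next
      assume "A \<in> insert (Suc L) ` configs L k"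
      then obtain B where B: "B \<in> configs L k" "A = insert (Suc L) B" by auto
      then have "finite B" "Suc L \<notin> B" unfolding configs_def by (auto intro: finite_subset)
      then show ?thesis using B unfolding configs_def by auto
    qed
  qed
  have d: "configs L (Suc k) \<inter> insert (Suc L) ` configs L k = {}"
    unfolding configs_def by auto
  have i: "inj_on (insert (Suc L)) (configs L k)"
    by (intro inj_onI) (metis Diff_insert_absorb atLeastAtMost_iff configs_def mem_Collect_eq not_less_eq_eq subsetD order_refl)
  show ?thesis unfolding e
    by (subst sum.union_disjoint) (auto simp: d sum.reindex[OF i] intro: finite_imageI)
qed

lemma exch_insert:
  assumes "M \<noteq> y" "M \<noteq> Suc y"
  shows "exch y (Suc y) (insert M B) = insert M (exch y (Suc y) B)"
  using assms unfolding exch_sw by (simp add: sw_def)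

lemma W_part:
  assumes c: "\<And>y. 1 \<le> y \<Longrightarrow> y < Suc L \<Longrightarrow> 0 \<le> c y"
    and IH: "\<And>n f. (\<Sum>A\<in>configs L n. f A) = 0 \<Longrightarrow>
              \<gamma> * (\<Sum>A\<in>configs L n. (f A)^2) \<le> (\<Sum>A\<in>configs L n. f A * ssep_gen L c f A)"
    and s: "(\<Sum>A\<in>configs (Suc L) (Suc k). w A) = 0"
    and t: "tr (Suc L) (Suc k) w (Suc L) = 0"
  shows "\<gamma> * (\<Sum>A\<in>configs (Suc L) (Suc k). (w A)^2) \<le> (\<Sum>A\<in>configs (Suc L) (Suc k). w A * ssep_gen (Suc L) c w A)"
proof -
  define w1 where "w1 B = w (insert (Suc L) B)" for B
  have t': "(\<Sum>B\<in>configs L k. w1 B) = 0"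
  proof -
    have "tr (Suc L) (Suc k) w (Suc L) = (\<Sum>A\<in>configs (Suc L) (Suc k). if Suc L \<in> A then w A else 0)"
      unfolding tr_def by (simp add: sum.inter_filter)
    also have "\<dots> = (\<Sum>B\<in>configs L (Suc k). if Suc L \<in> B then w B else 0) + (\<Sum>B\<in>configs L k. w1 B)"
      unfolding split_sum w1_def by simp
    also have "(\<Sum>B\<in>configs L (Suc k). if Suc L \<in> B then w B else 0) = 0"
      by (intro sum.neutral) (auto simp: configs_def)
    finally show ?thesis using t by simp
  qed
  have s': "(\<Sum>B\<in>configs L (Suc k). w B) = 0"
    using s t' unfolding split_sum w1_def by simp
  have Q: "(\<Sum>A\<in>configs (Suc L) (Suc k). (w A - w (exch y (Suc y) A))^2) =
      (\<Sum>B\<in>configs L (Suc k). (w B - w (exch y (Suc y) B))^2) + (\<Sum>B\<in>configs L k. (w1 B - w1 (exch y (Suc y) B))^2)"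
    if "y \<in> {1..<L}" for y
    using that unfolding split_sum w1_def by (simp add: exch_insert)
  have "(\<Sum>A\<in>configs (Suc L) (Suc k). w A * ssep_gen (Suc L) c w A)
      = (\<Sum>y\<in>{1..<Suc L}. c y * (\<Sum>A\<in>configs (Suc L) (Suc k). (w A - w (exch y (Suc y) A))^2)) / 2"
    by (rule gen_quad)
  also have "\<dots> \<ge> (\<Sum>y\<in>{1..<L}. c y * (\<Sum>A\<in>configs (Suc L) (Suc k). (w A - w (exch y (Suc y) A))^2)) / 2"
    by (intro divide_right_mono sum_mono2) (auto intro!: mult_nonneg_nonneg c sum_nonneg)
  also have "(\<Sum>y\<in>{1..<L}. c y * (\<Sum>A\<in>configs (Suc L) (Suc k). (w A - w (exch y (Suc y) A))^2)) / 2
     = (\<Sum>y\<in>{1..<L}. c y * (\<Sum>B\<in>configs L (Suc k). (w B - w (exch y (Suc y) B))^2)) / 2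
       + (\<Sum>y\<in>{1..<L}. c y * (\<Sum>B\<in>configs L k. (w1 B - w1 (exch y (Suc y) B))^2)) / 2"
    by (simp add: Q distrib_left sum.distrib add_divide_distrib)
  also have "\<dots> = (\<Sum>B\<in>configs L (Suc k). w B * ssep_gen L c w B) + (\<Sum>B\<in>configs L k. w1 B * ssep_gen L c w1 B)"
    by (simp add: gen_quad)
  finally have E: "(\<Sum>B\<in>configs L (Suc k). w B * ssep_gen L c w B) + (\<Sum>B\<in>configs L k. w1 B * ssep_gen L c w1 B)
     \<le> (\<Sum>A\<in>configs (Suc L) (Suc k). w A * ssep_gen (Suc L) c w A)" .
  have N: "(\<Sum>A\<in>configs (Suc L) (Suc k). (w A)^2) = (\<Sum>B\<in>configs L (Suc k). (w B)^2) + (\<Sum>B\<in>configs L k. (w1 B)^2)"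
    unfolding split_sum w1_def ..
  show ?thesis using IH[OF s'] IH[OF t'] E N by (simp add: distrib_left)
qed


lemma PI:
  assumes "\<And>y. 1 \<le> y \<Longrightarrow> y < L \<Longrightarrow> 0 \<le> c y" "0 \<le> \<gamma>" "RWP L c \<gamma>"
    "(\<Sum>A\<in>configs L n. f A) = 0"
  shows "\<gamma> * (\<Sum>A\<in>configs L n. (f A)^2) \<le> (\<Sum>A\<in>configs L n. f A * ssep_gen L c f A)"
  using assms
proof (induction L arbitrary: n f)
  case 0
  have "configs 0 n \<subseteq> {{}}" unfolding configs_def by auto
  then show ?case by (rule triv_case) (rule 0(4))
next
  case (Suc L)
  have c: "\<And>y. 1 \<le> y \<Longrightarrow> y < Suc L \<Longrightarrow> 0 \<le> c y" by fact
  have g0: "0 \<le> \<gamma>" by fact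
  have R: "RWP (Suc L) c \<gamma>" by fact
  have sf: "(\<Sum>A\<in>configs (Suc L) n. f A) = 0" by fact
  have IH: "\<gamma> * (\<Sum>A\<in>configs L n. (f A)^2) \<le> (\<Sum>A\<in>configs L n. f A * ssep_gen L c f A)"
    if "(\<Sum>A\<in>configs L n. f A) = 0" for n f
  proof -
    have c': "\<And>y. 1 \<le> y \<Longrightarrow> y < L \<Longrightarrow> 0 \<le> c y" using c by simp
    show ?thesis by (rule Suc.IH[OF c' g0 RWP_down[OF c' g0 R] that])
  qed
  consider "n = 0" | "Suc L \<le> n" | k where "n = Suc k" "k < L"
    by (cases n) force+
  then show ?case
  proof cases
    case 1
    have "configs (Suc L) n \<subseteq> {{}}"
    proof
      fix A assume A: "A \<in> configs (Suc L) n"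
      then have "finite A" by (rule configs_finite_mem)
      moreover have "card A = 0" using A 1 unfolding configs_def by simp
      ultimately show "A \<in> {{}}" by simp
    qed
    then show ?thesis by (rule triv_case) (rule sf)
  next
    case 2
    have "configs (Suc L) n \<subseteq> {{1..Suc L}}"
    proof
      fix A assume "A \<in> configs (Suc L) n"
      then have "A \<subseteq> {1..Suc L}" "card {1..Suc L} \<le> card A" using 2 unfolding configs_def by auto
      then show "A \<in> {{1..Suc L}}" using card_seteq by blast
    qed
    then show ?thesis by (rule triv_case) (rule sf)
  next
    case 3
    define a where "a = real ((Suc L - 2) choose k)"
    have apos: "a > 0" unfolding a_def using 3 by simp
    define g where "g x = tr (Suc L) n f x / a" for x
    define v where "v = lift g"
    define w where "w A = f A - v A" for A
    have cardA: "lift (\<lambda>_. 1) A = real n" if "A \<in> configs (Suc L) n" for A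
      using that unfolding lift_one configs_def by simp
    have "(\<Sum>A\<in>configs (Suc L) n. f A * lift (\<lambda>_. 1) A) = (\<Sum>x\<in>{1..Suc L}. 1 * tr (Suc L) n f x)"
      by (rule adjoint)
    then have "(\<Sum>x\<in>{1..Suc L}. tr (Suc L) n f x) = real n * (\<Sum>A\<in>configs (Suc L) n. f A)"
      using cardA by (simp add: sum_distrib_left mult.commute)
    then have G: "(\<Sum>x\<in>{1..Suc L}. g x) = 0"
      unfolding g_def sum_divide_distrib[symmetric] using sf by simp
    have trv: "tr (Suc L) n v x = a * g x" if "x \<in> {1..Suc L}" for x
      unfolding v_def 3 using tr_lift[OF that, of k g] G unfolding a_def by simp
    have trw: "tr (Suc L) n w x = 0" if "x \<in> {1..Suc L}" for x
    proof -
      have "tr (Suc L) n w x = tr (Suc L) n f x - tr (Suc L) n v x"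
        unfolding tr_def w_def by (simp add: sum_subtractf)
      then show ?thesis using trv[OF that] apos unfolding g_def by simp
    qed
    have "(\<Sum>A\<in>configs (Suc L) n. w A * lift (\<lambda>_. 1) A) = (\<Sum>x\<in>{1..Suc L}. 1 * tr (Suc L) n w x)"
      by (rule adjoint)
    then have "real n * (\<Sum>A\<in>configs (Suc L) n. w A) = 0"
      using cardA trw by (simp add: sum_distrib_left mult.commute)
    then have sw: "(\<Sum>A\<in>configs (Suc L) n. w A) = 0" using 3 by simp
    have Lv: "ssep_gen (Suc L) c v A = lift (rw (Suc L) c g) A" if "A \<in> configs (Suc L) n" for A
      unfolding v_def using lift_gen configs_finite_mem[OF that] by blast
    have vLv: "(\<Sum>A\<in>configs (Suc L) n. v A * ssep_gen (Suc L) c v A) = a * (\<Sum>x\<in>{1..Suc L}. g x * rw (Suc L) c g x)"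
    proof -
      have "(\<Sum>A\<in>configs (Suc L) n. v A * ssep_gen (Suc L) c v A) = (\<Sum>A\<in>configs (Suc L) n. v A * lift (rw (Suc L) c g) A)"
        using Lv by simp
      also have "\<dots> = (\<Sum>x\<in>{1..Suc L}. rw (Suc L) c g x * tr (Suc L) n v x)" by (rule adjoint)
      also have "\<dots> = a * (\<Sum>x\<in>{1..Suc L}. g x * rw (Suc L) c g x)"
        using trv by (simp add: sum_distrib_left algebra_simps)
      finally show ?thesis .
    qed
    have vv: "(\<Sum>A\<in>configs (Suc L) n. (v A)^2) = a * (\<Sum>x\<in>{1..Suc L}. (g x)^2)"
    proof -
      have "(\<Sum>A\<in>configs (Suc L) n. (v A)^2) = (\<Sum>A\<in>configs (Suc L) n. v A * lift g A)"
        unfolding v_def by (simp add: power2_eq_square)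
      also have "\<dots> = (\<Sum>x\<in>{1..Suc L}. g x * tr (Suc L) n v x)" by (rule adjoint)
      also have "\<dots> = a * (\<Sum>x\<in>{1..Suc L}. (g x)^2)"
        using trv by (simp add: sum_distrib_left algebra_simps power2_eq_square)
      finally show ?thesis .
    qed
    have wLv: "(\<Sum>A\<in>configs (Suc L) n. w A * ssep_gen (Suc L) c v A) = 0"
    proof -
      have "(\<Sum>A\<in>configs (Suc L) n. w A * ssep_gen (Suc L) c v A) = (\<Sum>A\<in>configs (Suc L) n. w A * lift (rw (Suc L) c g) A)"
        using Lv by simp
      also have "\<dots> = (\<Sum>x\<in>{1..Suc L}. rw (Suc L) c g x * tr (Suc L) n w x)" by (rule adjoint)
      also have "\<dots> = 0" using trw by simp
      finally show ?thesis .
    qed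
    have vLw: "(\<Sum>A\<in>configs (Suc L) n. v A * ssep_gen (Suc L) c w A) = 0"
      using wLv gen_sym by metis
    have vw: "(\<Sum>A\<in>configs (Suc L) n. v A * w A) = 0"
    proof -
      have "(\<Sum>A\<in>configs (Suc L) n. v A * w A) = (\<Sum>A\<in>configs (Suc L) n. w A * lift g A)"
        unfolding v_def by (simp add: mult.commute)
      also have "\<dots> = (\<Sum>x\<in>{1..Suc L}. g x * tr (Suc L) n w x)" by (rule adjoint)
      also have "\<dots> = 0" using trw by simp
      finally show ?thesis .
    qed
    have RW: "\<gamma> * (\<Sum>x\<in>{1..Suc L}. (g x)^2) \<le> (\<Sum>x\<in>{1..Suc L}. g x * rw (Suc L) c g x)"
      using R G unfolding RWP_def by blast
    have Vpart: "\<gamma> * (\<Sum>A\<in>configs (Suc L) n. (v A)^2) \<le> (\<Sum>A\<in>configs (Suc L) n. v A * ssep_gen (Suc L) c v A)"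
      unfolding vv vLv using mult_left_mono[OF RW, of a] apos by (simp add: algebra_simps)
    have Wpart: "\<gamma> * (\<Sum>A\<in>configs (Suc L) n. (w A)^2) \<le> (\<Sum>A\<in>configs (Suc L) n. w A * ssep_gen (Suc L) c w A)"
      unfolding 3 by (rule W_part[OF c IH]) (use sw trw[of "Suc L"] 3 in auto)
    have fA: "f A = v A + w A" for A unfolding w_def by simp
    have fe: "f = (\<lambda>A. v A + w A)" unfolding w_def by auto
    have Lf: "ssep_gen (Suc L) c f A = ssep_gen (Suc L) c v A + ssep_gen (Suc L) c w A" for A
      unfolding fe by (rule gen_add)
    have pt: "f A * ssep_gen (Suc L) c f A = v A * ssep_gen (Suc L) c v A + v A * ssep_gen (Suc L) c w A
       + w A * ssep_gen (Suc L) c v A + w A * ssep_gen (Suc L) c w A" for A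
      unfolding Lf fA by (simp add: distrib_left distrib_right)
    have LF: "(\<Sum>A\<in>configs (Suc L) n. f A * ssep_gen (Suc L) c f A) =
       (\<Sum>A\<in>configs (Suc L) n. v A * ssep_gen (Suc L) c v A) + (\<Sum>A\<in>configs (Suc L) n. v A * ssep_gen (Suc L) c w A)
       + (\<Sum>A\<in>configs (Suc L) n. w A * ssep_gen (Suc L) c v A) + (\<Sum>A\<in>configs (Suc L) n. w A * ssep_gen (Suc L) c w A)"
      unfolding pt by (simp only: sum.distrib)
    have pt2: "(f A)^2 = (v A)^2 + 2 * (v A * w A) + (w A)^2" for A
      unfolding fA by (simp add: power2_sum)
    have NF: "(\<Sum>A\<in>configs (Suc L) n. (f A)^2) = (\<Sum>A\<in>configs (Suc L) n. (v A)^2) + 2 * (\<Sum>A\<in>configs (Suc L) n. v A * w A)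
       + (\<Sum>A\<in>configs (Suc L) n. (w A)^2)"
      unfolding pt2 by (simp only: sum.distrib sum_distrib_left)
    have "\<gamma> * (\<Sum>A\<in>configs (Suc L) n. (f A)^2) = \<gamma> * (\<Sum>A\<in>configs (Suc L) n. (v A)^2) + \<gamma> * (\<Sum>A\<in>configs (Suc L) n. (w A)^2)"
      unfolding NF vw by (simp add: distrib_left)
    then show ?thesis unfolding LF vLw wLv using Vpart Wpart by linarith
  qed
qed



lemma quad_zero:
  fixes B C :: real
  assumes "\<And>t. 0 \<le> 2 * t * B + t^2 * C"
  shows "B = 0"
proof (rule ccontr)
  assume B: "B \<noteq> 0"
  define D where "D = \<bar>C\<bar> + 1"
  have D: "D > 0" "C \<le> D - 1" unfolding D_def by auto
  define t where "t = - B / D"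
  have "0 \<le> 2 * t * B + t^2 * C" by (rule assms)
  then have "0 \<le> D^2 * (2 * t * B + t^2 * C)" using D by simp
  also have "D^2 * (2 * t * B + t^2 * C) = B^2 * (C - 2 * D)"
    unfolding t_def using D by (simp add: field_simps power2_eq_square)
  finally have "0 \<le> B^2 * (C - 2 * D)" .
  moreover have "B^2 > 0" using B by simp
  moreover have "C - 2 * D < 0" using D by simp
  ultimately have "B^2 * (C - 2 * D) < 0" by (meson mult_pos_neg)
  then show False using \<open>0 \<le> B^2 * (C - 2 * D)\<close> by linarith
qed

lemma coord_cont: "continuous_on UNIV (\<lambda>g::nat \<Rightarrow> real. g x)"
  by simp

definition Erw :: "nat \<Rightarrow> (nat \<Rightarrow> real) \<Rightarrow> (nat \<Rightarrow> real) \<Rightarrow> real" where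
  "Erw L c g = (\<Sum>y\<in>{1..<L}. c y * (g y - g (Suc y))^2)"

lemma Erw_rw: "(\<Sum>x\<in>{1..L}. g x * rw L c g x) = Erw L c g"
  unfolding rw_quad Erw_def by (simp add: power2_eq_square)

lemma Erw_cont: "continuous_on UNIV (Erw L c)"
  unfolding Erw_def by (intro continuous_intros coord_cont)

lemma compact_K:
  "compact ({g::nat \<Rightarrow> real. g \<in> Pi\<^sub>E UNIV (\<lambda>x. if x \<in> {1..L} then cball 0 1 else {0})}
     \<inter> {g. (\<Sum>x\<in>{1..L}. g x) = 0} \<inter> {g. (\<Sum>x\<in>{1..L}. (g x)^2) = 1})"
proof -
  have "compactin (product_topology (\<lambda>_. euclidean) UNIV) (Pi\<^sub>E UNIV (\<lambda>x::nat. if x \<in> {1..L} then cball (0::real) 1 else {0}))"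
    by (subst compactin_PiE) auto
  then have "compact (Pi\<^sub>E UNIV (\<lambda>x::nat. if x \<in> {1..L} then cball (0::real) 1 else {0}))"
    by (simp add: euclidean_product_topology)
  moreover have "closed {g::nat \<Rightarrow> real. (\<Sum>x\<in>{1..L}. g x) = 0}"
    by (rule closed_Collect_eq) (intro continuous_intros coord_cont)+
  moreover have "closed {g::nat \<Rightarrow> real. (\<Sum>x\<in>{1..L}. (g x)^2) = 1}"
    by (rule closed_Collect_eq) (intro continuous_intros coord_cont)+
  ultimately show ?thesis by (simp add: compact_Int_closed Int_assoc closed_Int)
qed

lemma Erw_nonneg:
  assumes "\<And>y. 1 \<le> y \<Longrightarrow> y < L \<Longrightarrow> 0 < c y"
  shows "0 \<le> Erw L c g"
  unfolding Erw_def by (intro sum_nonneg mult_nonneg_nonneg) (auto intro!: less_imp_le[OF assms])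

lemma exists_min:
  assumes L: "2 \<le> L" and c: "\<And>y. 1 \<le> y \<Longrightarrow> y < L \<Longrightarrow> 0 < c y"
  shows "\<exists>g0 \<gamma>. \<gamma> > 0 \<and> RWP L c \<gamma> \<and> (\<forall>x\<in>{1..L}. rw L c g0 x = \<gamma> * g0 x) \<and> (\<exists>x\<in>{1..L}. g0 x \<noteq> 0)"
proof -
  define K where "K = {g::nat \<Rightarrow> real. g \<in> Pi\<^sub>E UNIV (\<lambda>x. if x \<in> {1..L} then cball 0 1 else {0})}
     \<inter> {g. (\<Sum>x\<in>{1..L}. g x) = 0} \<inter> {g. (\<Sum>x\<in>{1..L}. (g x)^2) = 1}"
  have cK: "compact K" unfolding K_def by (rule compact_K)
  define g1 :: "nat \<Rightarrow> real" where "g1 x = (if x = 1 then 1 / sqrt 2 else if x = 2 then - 1 / sqrt 2 else 0)" for x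
  have sub: "{1, 2} \<subseteq> {1..L}" using L by auto
  have "(\<Sum>x\<in>{1..L}. g1 x) = (\<Sum>x\<in>{1, 2}. g1 x)"
    by (rule sum.mono_neutral_right) (use sub in \<open>auto simp: g1_def\<close>)
  then have s1: "(\<Sum>x\<in>{1..L}. g1 x) = 0" by (simp add: g1_def)
  have "(\<Sum>x\<in>{1..L}. (g1 x)^2) = (\<Sum>x\<in>{1, 2}. (g1 x)^2)"
    by (rule sum.mono_neutral_right) (use sub in \<open>auto simp: g1_def\<close>)
  then have s2: "(\<Sum>x\<in>{1..L}. (g1 x)^2) = 1" by (simp add: g1_def power_divide)
  have "g1 \<in> K" unfolding K_def using s1 s2 L
    by (auto simp: g1_def PiE_iff real_le_rsqrt)
  then have Kne: "K \<noteq> {}" by auto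
  obtain g0 where g0K: "g0 \<in> K" and g0min: "\<And>g. g \<in> K \<Longrightarrow> Erw L c g0 \<le> Erw L c g"
    using continuous_attains_inf[OF cK Kne continuous_on_subset[OF Erw_cont subset_UNIV]] by blast
  define \<gamma> where "\<gamma> = Erw L c g0"
  have g0s: "(\<Sum>x\<in>{1..L}. g0 x) = 0" and g0n: "(\<Sum>x\<in>{1..L}. (g0 x)^2) = 1"
    using g0K unfolding K_def by auto
  have RWP: "RWP L c \<gamma>"
    unfolding RWP_def Erw_rw
  proof (intro allI impI)
    fix g :: "nat \<Rightarrow> real" assume sg: "(\<Sum>x\<in>{1..L}. g x) = 0"
    define s where "s = (\<Sum>x\<in>{1..L}. (g x)^2)"
    show "\<gamma> * (\<Sum>x\<in>{1..L}. (g x)^2) \<le> Erw L c g"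
    proof (cases "s = 0")
      case True
      have "0 \<le> Erw L c g" by (rule Erw_nonneg) (rule c)
      with True show ?thesis unfolding s_def by simp
    next
      case False
      have s0: "s > 0" using False unfolding s_def by (metis less_eq_real_def sum_nonneg zero_le_power2)
      define g' where "g' x = (if x \<in> {1..L} then g x / sqrt s else 0)" for x
      have "\<bar>g x\<bar> \<le> sqrt s" if "x \<in> {1..L}" for x
      proof -
        have "(g x)^2 \<le> s" unfolding s_def
          by (rule member_le_sum[where f="\<lambda>x. (g x)^2"]) (use that in auto)
        then show ?thesis by (simp add: real_le_rsqrt)
      qed
      then have ab: "\<bar>g' x\<bar> \<le> 1" for x using s0 unfolding g'_def by (auto simp: abs_div divide_le_eq_1)
      have "g' x \<in> (if x \<in> {1..L} then cball 0 1 else {0})" for x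
      proof (cases "x \<in> {1..L}")
        case True
        then show ?thesis using ab[of x] by (simp add: dist_real_def)
      next
        case False
        then have "g' x = 0" unfolding g'_def by meson
        then show ?thesis using False by simp
      qed
      moreover have "(\<Sum>x\<in>{1..L}. g' x) = 0" unfolding g'_def using sg by (simp add: sum_divide_distrib[symmetric])
      moreover have "(\<Sum>x\<in>{1..L}. (g' x)^2) = 1" unfolding g'_def using s0
        by (simp add: power_divide sum_divide_distrib[symmetric] s_def)
      ultimately have "g' \<in> K" unfolding K_def by (auto simp: PiE_iff simp del: mem_cball)
      then have "\<gamma> \<le> Erw L c g'" using g0min unfolding \<gamma>_def by blast
      also have "Erw L c g' = Erw L c g / s"
        unfolding Erw_def g'_def sum_divide_distrib using s0
        by (intro sum.cong) (auto simp: power_divide diff_divide_distrib[symmetric])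
      finally show ?thesis using s0 unfolding s_def[symmetric] by (simp add: le_divide_eq mult.commute)
    qed
  qed
  have gpos: "\<gamma> > 0"
  proof (rule ccontr)
    assume "\<not> \<gamma> > 0"
    moreover have "0 \<le> Erw L c g0" by (rule Erw_nonneg) (rule c)
    ultimately have "Erw L c g0 = 0" unfolding \<gamma>_def by simp
    moreover have "\<And>y. y \<in> {1..<L} \<Longrightarrow> 0 \<le> c y * (g0 y - g0 (Suc y))^2"
    proof -
      fix y assume "y \<in> {1..<L}"
      then have "0 \<le> c y" using c by (simp add: less_imp_le)
      then show "0 \<le> c y * (g0 y - g0 (Suc y))^2" by simp
    qed
    ultimately have "\<forall>y\<in>{1..<L}. c y * (g0 y - g0 (Suc y))^2 = 0"
      unfolding Erw_def using sum_nonneg_eq_0_iff[of "{1..<L}" "\<lambda>y. c y * (g0 y - g0 (Suc y))^2"] by simp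
    then have stp: "g0 (Suc y) = g0 y" if "1 \<le> y" "y < L" for y
    proof -
      have "c y * (g0 y - g0 (Suc y))^2 = 0" using that \<open>\<forall>y\<in>{1..<L}. c y * (g0 y - g0 (Suc y))^2 = 0\<close> by simp
      then show ?thesis using c[OF that] by simp
    qed
    have const: "g0 x = g0 1" if "x \<in> {1..L}" for x
    proof -
      have "1 \<le> x" "x \<le> L" using that by auto
      then show ?thesis
      proof (induction x rule: dec_induct)
        case base then show ?case by simp
        next
        case (step m) then show ?case using stp[of m] by simp
      qed
    qed
    have "(\<Sum>x\<in>{1..L}. g0 x) = (\<Sum>x\<in>{1..L}. g0 1)" by (rule sum.cong[OF refl const])
    then have "(\<Sum>x\<in>{1..L}. g0 x) = real L * g0 1" by simp
    then have z: "g0 1 = 0" using g0s L by simp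
    have "(\<Sum>x\<in>{1..L}. (g0 x)^2) = (\<Sum>x\<in>{1..L}. (g0 1)^2)"
      by (rule sum.cong[OF refl]) (metis const)
    then have "(\<Sum>x\<in>{1..L}. (g0 x)^2) = 0" using z by simp
    then show False using g0n by simp
  qed
  have B0: "(\<Sum>y\<in>{1..<L}. c y * ((g0 y - g0 (Suc y)) * (h y - h (Suc y)))) - \<gamma> * (\<Sum>x\<in>{1..L}. g0 x * h x) = 0"
    if sh: "(\<Sum>x\<in>{1..L}. h x) = 0" for h
  proof (rule quad_zero)
    fix t :: real
    define u where "u x = g0 x + t * h x" for x
    have "(\<Sum>x\<in>{1..L}. u x) = 0" unfolding u_def using g0s sh by (simp add: sum.distrib sum_distrib_left[symmetric])
    then have "\<gamma> * (\<Sum>x\<in>{1..L}. (u x)^2) \<le> Erw L c u" using RWP unfolding RWP_def Erw_rw by blast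
    moreover have "(\<Sum>x\<in>{1..L}. (u x)^2) = 1 + 2 * t * (\<Sum>x\<in>{1..L}. g0 x * h x) + t^2 * (\<Sum>x\<in>{1..L}. (h x)^2)"
    proof -
      have "(\<Sum>x\<in>{1..L}. (u x)^2) = (\<Sum>x\<in>{1..L}. (g0 x)^2 + (2 * t) * (g0 x * h x) + t^2 * (h x)^2)"
        unfolding u_def by (intro sum.cong refl) (simp add: power2_sum power_mult_distrib)
      also have "\<dots> = (\<Sum>x\<in>{1..L}. (g0 x)^2) + (2 * t) * (\<Sum>x\<in>{1..L}. g0 x * h x) + t^2 * (\<Sum>x\<in>{1..L}. (h x)^2)"
        by (simp only: sum.distrib sum_distrib_left)
      finally show ?thesis using g0n by simp
    qed
    moreover have "Erw L c u = \<gamma> + 2 * t * (\<Sum>y\<in>{1..<L}. c y * ((g0 y - g0 (Suc y)) * (h y - h (Suc y)))) + t^2 * Erw L c h"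
    proof -
      have "Erw L c u = (\<Sum>y\<in>{1..<L}. c y * (g0 y - g0 (Suc y))^2 + (2 * t) * (c y * ((g0 y - g0 (Suc y)) * (h y - h (Suc y))))
          + t^2 * (c y * (h y - h (Suc y))^2))"
        unfolding Erw_def u_def by (intro sum.cong refl) (simp add: power2_eq_square algebra_simps)
      also have "\<dots> = (\<Sum>y\<in>{1..<L}. c y * (g0 y - g0 (Suc y))^2) + (2 * t) * (\<Sum>y\<in>{1..<L}. c y * ((g0 y - g0 (Suc y)) * (h y - h (Suc y))))
          + t^2 * (\<Sum>y\<in>{1..<L}. c y * (h y - h (Suc y))^2)"
        by (simp only: sum.distrib sum_distrib_left)
      finally show ?thesis unfolding \<gamma>_def Erw_def .
    qed
    ultimately have I: "\<gamma> * (1 + 2 * t * (\<Sum>x\<in>{1..L}. g0 x * h x) + t^2 * (\<Sum>x\<in>{1..L}. (h x)^2))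
       \<le> \<gamma> + 2 * t * (\<Sum>y\<in>{1..<L}. c y * ((g0 y - g0 (Suc y)) * (h y - h (Suc y)))) + t^2 * Erw L c h"
      by simp
    have "2 * t * ((\<Sum>y\<in>{1..<L}. c y * ((g0 y - g0 (Suc y)) * (h y - h (Suc y)))) - \<gamma> * (\<Sum>x\<in>{1..L}. g0 x * h x))
        + t^2 * (Erw L c h - \<gamma> * (\<Sum>x\<in>{1..L}. (h x)^2)) =
        (\<gamma> + 2 * t * (\<Sum>y\<in>{1..<L}. c y * ((g0 y - g0 (Suc y)) * (h y - h (Suc y)))) + t^2 * Erw L c h)
        - \<gamma> * (1 + 2 * t * (\<Sum>x\<in>{1..L}. g0 x * h x) + t^2 * (\<Sum>x\<in>{1..L}. (h x)^2))"
      by (simp add: right_diff_distrib distrib_left)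
    with I show "0 \<le> 2 * t * ((\<Sum>y\<in>{1..<L}. c y * ((g0 y - g0 (Suc y)) * (h y - h (Suc y)))) - \<gamma> * (\<Sum>x\<in>{1..L}. g0 x * h x))
        + t^2 * (Erw L c h - \<gamma> * (\<Sum>x\<in>{1..L}. (h x)^2))"
      by linarith
  qed
  define r where "r x = rw L c g0 x - \<gamma> * g0 x" for x
  have "(\<Sum>x\<in>{1..L}. r x) = 0" unfolding r_def using g0s rw_sum0[of L c g0]
    by (simp add: sum_subtractf sum_distrib_left[symmetric])
  then have "(\<Sum>y\<in>{1..<L}. c y * ((g0 y - g0 (Suc y)) * (r y - r (Suc y)))) - \<gamma> * (\<Sum>x\<in>{1..L}. g0 x * r x) = 0"
    by (rule B0)
  moreover have "(\<Sum>y\<in>{1..<L}. c y * ((g0 y - g0 (Suc y)) * (r y - r (Suc y)))) = (\<Sum>x\<in>{1..L}. r x * rw L c g0 x)"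
    unfolding rw_quad by (intro sum.cong refl) (simp add: mult.commute)
  moreover have "(\<Sum>x\<in>{1..L}. r x * r x) = (\<Sum>x\<in>{1..L}. r x * rw L c g0 x) - \<gamma> * (\<Sum>x\<in>{1..L}. g0 x * r x)"
  proof -
    have rr: "r x * r x = r x * rw L c g0 x - \<gamma> * (g0 x * r x)" for x
    proof -
      have "r x * r x = r x * (rw L c g0 x - \<gamma> * g0 x)" by (subst (2) r_def) (rule refl)
      then show ?thesis by (simp add: algebra_simps)
    qed
    have "(\<Sum>x\<in>{1..L}. r x * r x) = (\<Sum>x\<in>{1..L}. r x * rw L c g0 x - \<gamma> * (g0 x * r x))"
      by (rule sum.cong[OF refl rr])
    then show ?thesis by (simp only: sum_subtractf sum_distrib_left)
  qed
  ultimately have "(\<Sum>x\<in>{1..L}. r x * r x) = 0" by simp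
  then have "\<forall>x\<in>{1..L}. r x * r x = 0"
    by (subst sum_nonneg_eq_0_iff[symmetric]) auto
  then have eig: "\<forall>x\<in>{1..L}. rw L c g0 x = \<gamma> * g0 x" unfolding r_def by simp
  have "\<exists>x\<in>{1..L}. g0 x \<noteq> 0"
  proof (rule ccontr)
    assume "\<not> ?thesis" then have "(\<Sum>x\<in>{1..L}. (g0 x)^2) = 0" by simp
    then show False using g0n by simp
  qed
  then show ?thesis using gpos RWP eig by blast
qed

lemma lift_eigen:
  assumes n: "1 \<le> n" "n \<le> L - 1" and eig: "\<forall>x\<in>{1..L}. rw L c g x = \<mu> * g x"
    and nz: "x0 \<in> {1..L}" "g x0 \<noteq> 0"
  shows "is_eigenvalue_n L c n \<mu>"
  unfolding is_eigenvalue_n_def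
proof (intro exI conjI ballI)
  fix A assume A: "A \<in> configs L n"
  then have sub: "A \<subseteq> {1..L}" and fA: "finite A" unfolding configs_def by (auto intro: finite_subset)
  have "ssep_gen L c (lift g) A = lift (rw L c g) A" by (rule lift_gen[OF fA])
  also have "\<dots> = (\<Sum>x\<in>A. \<mu> * g x)" unfolding lift_def using sub eig by (intro sum.cong) auto
  also have "\<dots> = \<mu> * lift g A" unfolding lift_def by (simp add: sum_distrib_left)
  finally show "ssep_gen L c (lift g) A = \<mu> * lift g A" .
next
  obtain k where k: "n = Suc k" using n by (cases n) auto
  have L2: "2 \<le> L" using n by simp
  obtain z where z: "z \<in> {1..L}" "z \<noteq> x0"
  proof (cases "x0 = 1")
    case True then show ?thesis using that[of 2] L2 by auto
  next
    case False then show ?thesis using that[of 1] L2 by auto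
  qed
  show "\<exists>A\<in>configs L n. lift g A \<noteq> 0"
  proof (rule ccontr)
    assume "\<not> ?thesis"
    then have all0: "\<And>A. A \<in> configs L n \<Longrightarrow> lift g A = 0" by blast
    have constx: "g y = g x" if xy: "x \<in> {1..L}" "y \<in> {1..L}" "x \<noteq> y" for x y
    proof -
      have "card {A\<in>configs L (Suc k). x \<in> A \<and> y \<notin> A} = (L - 2) choose k"
        by (rule cnt2[OF xy])
      moreover have "(L - 2) choose k > 0" using n k by simp
      ultimately have "{A\<in>configs L (Suc k). x \<in> A \<and> y \<notin> A} \<noteq> {}" by (metis card.empty less_irrefl)
      then obtain A where A: "A \<in> configs L n" "x \<in> A" "y \<notin> A" using k by auto
      have fA: "finite A" using A(1) by (rule configs_finite_mem)
      define A' where "A' = insert y (A - {x})"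
      have cp: "card A > 0" using fA A(2) card_gt_0_iff by blast
      have "A' \<in> configs L n"
        using A xy fA cp unfolding A'_def configs_def by (auto simp: card_insert_if)
      then have "lift g A' = 0" by (rule all0)
      moreover have "lift g A = 0" using A(1) by (rule all0)
      moreover have "lift g A = g x + (\<Sum>u\<in>A - {x}. g u)"
        unfolding lift_def using fA A(2) by (simp add: sum.remove)
      moreover have "lift g A' = g y + (\<Sum>u\<in>A - {x}. g u)"
        unfolding lift_def A'_def using fA A(3) by simp
      ultimately show ?thesis by simp
    qed
    have "card {A\<in>configs L (Suc k). x0 \<in> A \<and> z \<notin> A} = (L - 2) choose k"
      by (rule cnt2[OF nz(1) z(1)]) (use z in auto)
    moreover have "(L - 2) choose k > 0" using n k by simp
    ultimately have "{A\<in>configs L (Suc k). x0 \<in> A \<and> z \<notin> A} \<noteq> {}" by (metis card.empty less_irrefl)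
    then obtain A where A: "A \<in> configs L n" "x0 \<in> A" using k by auto
    have sub: "A \<subseteq> {1..L}" and cA: "card A = n" using A(1) unfolding configs_def by auto
    have "lift g A = (\<Sum>u\<in>A. g x0)"
      unfolding lift_def
    proof (rule sum.cong[OF refl])
      fix u assume "u \<in> A"
      then show "g u = g x0" using constx[of x0 u] sub nz(1) by (cases "u = x0") auto
    qed
    also have "\<dots> = real n * g x0" using cA by simp
    finally have "lift g A \<noteq> 0" using nz(2) n by simp
    then show False using all0 A(1) by blast
  qed
qed

theorem corollary1:
  fixes L :: nat and c :: "nat \<Rightarrow> real" and n :: nat
  assumes "L \<ge> 2"
    and "\<And>x. 1 \<le> x \<Longrightarrow> x < L \<Longrightarrow> c x > 0"
    and "1 \<le> n" and "n \<le> L - 1"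
  shows "spectral_gap L c n = spectral_gap L c 1"
proof -
  obtain g0 \<gamma> where gp: "\<gamma> > 0" and R: "RWP L c \<gamma>" and eig: "\<forall>x\<in>{1..L}. rw L c g0 x = \<gamma> * g0 x"
    and nz: "\<exists>x\<in>{1..L}. g0 x \<noteq> 0"
  proof -
    have "\<exists>g0 \<gamma>. \<gamma> > 0 \<and> RWP L c \<gamma> \<and> (\<forall>x\<in>{1..L}. rw L c g0 x = \<gamma> * g0 x) \<and> (\<exists>x\<in>{1..L}. g0 x \<noteq> 0)"
      by (rule exists_min) (use assms in auto)
    then show thesis using that by blast
  qed
  have cnn: "\<And>y. 1 \<le> y \<Longrightarrow> y < L \<Longrightarrow> 0 \<le> c y" using assms(2) less_imp_le by blast
  have gap: "spectral_gap L c m = \<gamma>" if m: "1 \<le> m" "m \<le> L - 1" for m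
    unfolding spectral_gap_def
  proof (rule cInf_eq_minimum)
    show "\<gamma> \<in> {\<mu>. \<mu> > 0 \<and> is_eigenvalue_n L c m \<mu>}"
      using gp lift_eigen[OF m eig] nz by blast
  next
    fix \<mu> assume "\<mu> \<in> {\<mu>. \<mu> > 0 \<and> is_eigenvalue_n L c m \<mu>}"
    then have mp: "\<mu> > 0" and "is_eigenvalue_n L c m \<mu>" by auto
    then obtain f where fnz: "\<exists>A\<in>configs L m. f A \<noteq> 0"
      and fe: "\<forall>A\<in>configs L m. ssep_gen L c f A = \<mu> * f A"
      unfolding is_eigenvalue_n_def by blast
    have "\<mu> * (\<Sum>A\<in>configs L m. f A) = (\<Sum>A\<in>configs L m. ssep_gen L c f A)"
      using fe by (simp add: sum_distrib_left)
    then have sf: "(\<Sum>A\<in>configs L m. f A) = 0" using gen_sum0[where L=L and n=m and c=c and f=f] mp by simp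
    have "\<gamma> * (\<Sum>A\<in>configs L m. (f A)^2) \<le> (\<Sum>A\<in>configs L m. f A * ssep_gen L c f A)"
      by (rule PI[OF cnn _ R sf]) (use gp in auto)
    also have "\<dots> = \<mu> * (\<Sum>A\<in>configs L m. (f A)^2)"
      using fe by (simp add: sum_distrib_left power2_eq_square algebra_simps)
    finally have le: "\<gamma> * (\<Sum>A\<in>configs L m. (f A)^2) \<le> \<mu> * (\<Sum>A\<in>configs L m. (f A)^2)" .
    have "(\<Sum>A\<in>configs L m. (f A)^2) > 0"
    proof -
      obtain A where "A \<in> configs L m" "f A \<noteq> 0" using fnz by blast
      moreover have "(f A)^2 \<le> (\<Sum>A\<in>configs L m. (f A)^2)"
        by (rule member_le_sum) (use \<open>A \<in> configs L m\<close> in auto)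
      ultimately show ?thesis by (meson less_le_trans zero_less_power2)
    qed
    then show "\<gamma> \<le> \<mu>" using le by simp
  qed
  show ?thesis using gap[OF assms(3,4)] gap[of 1] assms(1) by simp
qed

end
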